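(* For every integer $k\geq 1$, the Dobrynin graph $\mathrm{Dob}_k$ (defined below) is interval transmission irregular; more precisely, its $2k+5$ vertices have pairwise distinct transmissions, and the set of these transmissions is $\{3k+4,3k+5,\dots,5k+8\}$.
   Context: All graphs are finite, simple and connected. For a connected graph $G$ and a vertex $u$, the transmission is $Tr_G(u)=\sum_{v\in V(G)} d_G(u,v)$, where $d_G$ is the shortest-path distance. A graph is transmission irregular (TI) if no two of its vertices have equal transmission, and interval transmission irregular (ITI) if it is TI and its set of vertex transmissions equals $[p,q]\cap\mathbb{Z}$ for some integers $p\le q$. The Dobrynin graph $\mathrm{Dob}_k$ ($k\ge1$) has vertex set $\{a,b,c,d\}\cup A\cup B\cup\{ab_1,ab_2\}$ with $A=\{a_0,a_1,\dots,a_{k-1}\}$ and $B=\{b_1,\dots,b_{k-1}\}$ (so $B=\emptyset$ when $k=1$), and edge set: $ab$; $ac$ and $bd$ (so $c,d$ are pendent); $a a_i$ for all $i$; $b b_j$ for all $j$; $a\,ab_1, b\,ab_1, a\,ab_2, b\,ab_2$; $a_i b_j$ for all $1\le j\le i\le k-1$ (so $a_i$ is adjacent to $b_1,\dots,b_i$); $ab_1 a_i$ for all $0\le i\le k-1$; and $ab_2 b_j$ for all $1\le j\le k-1$. There are no other edges. *)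

theory Defs
  imports Main
begin

fun walk :: "('a \<Rightarrow> 'a \<Rightarrow> bool) \<Rightarrow> 'a list \<Rightarrow> bool" where
  "walk E [] = False"
| "walk E [x] = True"
| "walk E (x # y # xs) = (E x y \<and> walk E (y # xs))"

definition gdist :: "'a set \<Rightarrow> ('a \<Rightarrow> 'a \<Rightarrow> bool) \<Rightarrow> 'a \<Rightarrow> 'a \<Rightarrow> nat" where
  "gdist V E u v = (LEAST n. \<exists>xs. walk E xs \<and> set xs \<subseteq> V \<and> hd xs = u \<and> last xs = v
                                 \<and> length xs = Suc n)"

definition connected_graph :: "'a set \<Rightarrow> ('a \<Rightarrow> 'a \<Rightarrow> bool) \<Rightarrow> bool" where
  "connected_graph V E = (\<forall>u\<in>V. \<forall>v\<in>V. \<exists>xs. walk E xs \<and> set xs \<subseteq> V \<and> hd xs = u \<and> last xs = v)"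

definition transmission :: "'a set \<Rightarrow> ('a \<Rightarrow> 'a \<Rightarrow> bool) \<Rightarrow> 'a \<Rightarrow> nat" where
  "transmission V E u = (\<Sum>v\<in>V. gdist V E u v)"

definition transmission_irregular :: "'a set \<Rightarrow> ('a \<Rightarrow> 'a \<Rightarrow> bool) \<Rightarrow> bool" where
  "transmission_irregular V E = inj_on (transmission V E) V"

definition interval_transmission_irregular :: "'a set \<Rightarrow> ('a \<Rightarrow> 'a \<Rightarrow> bool) \<Rightarrow> bool" where
  "interval_transmission_irregular V E =
     (transmission_irregular V E \<and> (\<exists>p q. p \<le> q \<and> transmission V E ` V = {p..q}))"

datatype dvert = Va | Vb | Vc | Vd | Vai nat | Vbj nat | Vab1 | Vab2

definition dob_V :: "nat \<Rightarrow> dvert set" where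
  "dob_V k = {Va, Vb, Vc, Vd, Vab1, Vab2} \<union> Vai ` {0..<k} \<union> Vbj ` {1..<k}"

definition dob_edge0 :: "nat \<Rightarrow> dvert \<Rightarrow> dvert \<Rightarrow> bool" where
  "dob_edge0 k x y =
     ((x = Va \<and> y = Vb) \<or> (x = Va \<and> y = Vc) \<or> (x = Vb \<and> y = Vd)
    \<or> (\<exists>i<k. x = Va \<and> y = Vai i)
    \<or> (\<exists>j. 1 \<le> j \<and> j < k \<and> x = Vb \<and> y = Vbj j)
    \<or> (x = Va \<and> y = Vab1) \<or> (x = Vb \<and> y = Vab1) \<or> (x = Va \<and> y = Vab2) \<or> (x = Vb \<and> y = Vab2)
    \<or> (\<exists>i j. 1 \<le> j \<and> j \<le> i \<and> i < k \<and> x = Vai i \<and> y = Vbj j)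
    \<or> (\<exists>i<k. x = Vab1 \<and> y = Vai i)
    \<or> (\<exists>j. 1 \<le> j \<and> j < k \<and> x = Vab2 \<and> y = Vbj j))"

definition dob_E :: "nat \<Rightarrow> dvert \<Rightarrow> dvert \<Rightarrow> bool" where
  "dob_E k x y = (dob_edge0 k x y \<or> dob_edge0 k y x)"

end

theory Submission
  imports Defs
begin

lemma walk_app: "xs \<noteq> [] \<Longrightarrow> walk E (xs @ [y]) = (walk E xs \<and> E (last xs) y)"
  by (induction E xs rule: walk.induct) auto

lemma walk_lower:
  "walk E xs \<Longrightarrow> set xs \<subseteq> V \<Longrightarrow> (\<forall>x y. x\<in>V \<longrightarrow> y\<in>V \<longrightarrow> E x y \<longrightarrow> f y \<le> f x + 1)
   \<Longrightarrow> f (last xs) \<le> f (hd xs) + (length xs - 1)"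
proof (induction E xs rule: walk.induct)
  case (3 E x y xs)
  then have "f (last (y#xs)) \<le> f y + length xs" "f y \<le> f x + 1" by auto
  then show ?case by simp
qed auto

lemma walk_upper:
  assumes "u \<in> V" "\<forall>v\<in>V. f v = 0 \<longrightarrow> v = u"
    "\<forall>v\<in>V. 0 < f v \<longrightarrow> p v \<in> V \<and> E (p v) v \<and> f (p v) + 1 = f v"
  shows "v\<in>V \<Longrightarrow> f v = n \<Longrightarrow> \<exists>xs. walk E xs \<and> set xs \<subseteq> V \<and> hd xs = u \<and> last xs = v \<and> length xs = Suc n"
proof (induction n arbitrary: v)
  case 0
  then show ?case using assms by (intro exI[of _ "[u]"]) auto
next
  case (Suc n)
  then have p: "p v \<in> V" "E (p v) v" "f (p v) = n" using assms(3) by auto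
  then obtain xs where xs: "walk E xs" "set xs \<subseteq> V" "hd xs = u" "last xs = p v" "length xs = Suc n"
    using Suc.IH by blast
  then have ne: "xs \<noteq> []" by auto
  show ?case using xs ne p Suc.prems
    by (intro exI[of _ "xs @ [v]"]) (auto simp: walk_app hd_append)
qed

lemma gdist_eq:
  assumes "u \<in> V" "f u = 0" "\<forall>v\<in>V. f v = 0 \<longrightarrow> v = u"
    "\<forall>v\<in>V. 0 < f v \<longrightarrow> p v \<in> V \<and> E (p v) v \<and> f (p v) + 1 = f v"
    "\<forall>x y. x\<in>V \<longrightarrow> y\<in>V \<longrightarrow> E x y \<longrightarrow> f y \<le> f x + 1"
    "v \<in> V"
  shows "gdist V E u v = f v"
  unfolding gdist_def
proof (rule Least_equality)
  show "\<exists>xs. walk E xs \<and> set xs \<subseteq> V \<and> hd xs = u \<and> last xs = v \<and> length xs = Suc (f v)"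
    using walk_upper[of u V f p E v "f v"] assms by blast
next
  fix n assume "\<exists>xs. walk E xs \<and> set xs \<subseteq> V \<and> hd xs = u \<and> last xs = v \<and> length xs = Suc n"
  then obtain xs where xs: "walk E xs" "set xs \<subseteq> V" "hd xs = u" "last xs = v" "length xs = Suc n" by blast
  from walk_lower[OF xs(1,2) assms(5)] xs assms(2) show "f v \<le> n" by simp
qed

fun dd :: "dvert \<Rightarrow> dvert \<Rightarrow> nat" where
  "dd Va v = (case v of Va \<Rightarrow> 0 | Vb \<Rightarrow> 1 | Vc \<Rightarrow> 1 | Vd \<Rightarrow> 2 | Vai _ \<Rightarrow> 1 | Vbj _ \<Rightarrow> 2 | Vab1 \<Rightarrow> 1 | Vab2 \<Rightarrow> 1)"
| "dd Vb v = (case v of Va \<Rightarrow> 1 | Vb \<Rightarrow> 0 | Vc \<Rightarrow> 2 | Vd \<Rightarrow> 1 | Vai _ \<Rightarrow> 2 | Vbj _ \<Rightarrow> 1 | Vab1 \<Rightarrow> 1 | Vab2 \<Rightarrow> 1)"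
| "dd Vc v = (case v of Va \<Rightarrow> 1 | Vb \<Rightarrow> 2 | Vc \<Rightarrow> 0 | Vd \<Rightarrow> 3 | Vai _ \<Rightarrow> 2 | Vbj _ \<Rightarrow> 3 | Vab1 \<Rightarrow> 2 | Vab2 \<Rightarrow> 2)"
| "dd Vd v = (case v of Va \<Rightarrow> 2 | Vb \<Rightarrow> 1 | Vc \<Rightarrow> 3 | Vd \<Rightarrow> 0 | Vai _ \<Rightarrow> 3 | Vbj _ \<Rightarrow> 2 | Vab1 \<Rightarrow> 2 | Vab2 \<Rightarrow> 2)"
| "dd Vab1 v = (case v of Va \<Rightarrow> 1 | Vb \<Rightarrow> 1 | Vc \<Rightarrow> 2 | Vd \<Rightarrow> 2 | Vai _ \<Rightarrow> 1 | Vbj _ \<Rightarrow> 2 | Vab1 \<Rightarrow> 0 | Vab2 \<Rightarrow> 2)"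
| "dd Vab2 v = (case v of Va \<Rightarrow> 1 | Vb \<Rightarrow> 1 | Vc \<Rightarrow> 2 | Vd \<Rightarrow> 2 | Vai _ \<Rightarrow> 2 | Vbj _ \<Rightarrow> 1 | Vab1 \<Rightarrow> 2 | Vab2 \<Rightarrow> 0)"
| "dd (Vai i) v = (case v of Va \<Rightarrow> 1 | Vb \<Rightarrow> 2 | Vc \<Rightarrow> 2 | Vd \<Rightarrow> 3
     | Vai l \<Rightarrow> (if l = i then 0 else 2) | Vbj j \<Rightarrow> (if 1 \<le> j \<and> j \<le> i then 1 else 3) | Vab1 \<Rightarrow> 1 | Vab2 \<Rightarrow> 2)"
| "dd (Vbj j) v = (case v of Va \<Rightarrow> 2 | Vb \<Rightarrow> 1 | Vc \<Rightarrow> 3 | Vd \<Rightarrow> 2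
     | Vai i \<Rightarrow> (if 1 \<le> j \<and> j \<le> i then 1 else 3) | Vbj l \<Rightarrow> (if l = j then 0 else 2) | Vab1 \<Rightarrow> 2 | Vab2 \<Rightarrow> 1)"

fun pp :: "dvert \<Rightarrow> dvert \<Rightarrow> dvert" where
  "pp Va v = (case v of Vd \<Rightarrow> Vb | Vbj _ \<Rightarrow> Vb | _ \<Rightarrow> Va)"
| "pp Vb v = (case v of Vc \<Rightarrow> Va | Vai _ \<Rightarrow> Va | _ \<Rightarrow> Vb)"
| "pp Vc v = (case v of Va \<Rightarrow> Vc | Vd \<Rightarrow> Vb | Vbj _ \<Rightarrow> Vb | _ \<Rightarrow> Va)"
| "pp Vd v = (case v of Vb \<Rightarrow> Vd | Vc \<Rightarrow> Va | Vai _ \<Rightarrow> Va | _ \<Rightarrow> Vb)"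
| "pp Vab1 v = (case v of Vc \<Rightarrow> Va | Vab2 \<Rightarrow> Va | Vd \<Rightarrow> Vb | Vbj _ \<Rightarrow> Vb | _ \<Rightarrow> Vab1)"
| "pp Vab2 v = (case v of Vc \<Rightarrow> Va | Vab1 \<Rightarrow> Va | Vai _ \<Rightarrow> Va | Vd \<Rightarrow> Vb | _ \<Rightarrow> Vab2)"
| "pp (Vai i) v = (case v of Va \<Rightarrow> Vai i | Vab1 \<Rightarrow> Vai i | Vbj j \<Rightarrow> (if j \<le> i then Vai i else Vb)
     | Vd \<Rightarrow> Vb | _ \<Rightarrow> Va)"
| "pp (Vbj j) v = (case v of Vb \<Rightarrow> Vbj j | Vab2 \<Rightarrow> Vbj j | Vai i \<Rightarrow> (if j \<le> i then Vbj j else Va)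
     | Vc \<Rightarrow> Va | _ \<Rightarrow> Vb)"

lemma memV: "v \<in> dob_V k \<longleftrightarrow> (case v of Vai i \<Rightarrow> i < k | Vbj j \<Rightarrow> 1 \<le> j \<and> j < k | _ \<Rightarrow> True)"
  unfolding dob_V_def by (cases v) auto

lemma lip0: "dob_edge0 k x y \<Longrightarrow> dd u y \<le> dd u x + 1 \<and> dd u x \<le> dd u y + 1"
  unfolding dob_edge0_def by (cases u) auto

lemma lip: "x \<in> dob_V k \<Longrightarrow> y \<in> dob_V k \<Longrightarrow> dob_E k x y \<Longrightarrow> dd u y \<le> dd u x + 1"
  unfolding dob_E_def using lip0 by blast

lemma zero: "u \<in> dob_V k \<Longrightarrow> v \<in> dob_V k \<Longrightarrow> dd u v = 0 \<Longrightarrow> v = u"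
  unfolding memV by (cases u; cases v) (auto split: if_splits)

lemma par: "u \<in> dob_V k \<Longrightarrow> v \<in> dob_V k \<Longrightarrow> 0 < dd u v \<Longrightarrow>
   pp u v \<in> dob_V k \<and> dob_E k (pp u v) v \<and> dd u (pp u v) + 1 = dd u v"
  unfolding memV dob_E_def dob_edge0_def by (cases u; cases v) (auto split: if_splits)


lemma gd: "u \<in> dob_V k \<Longrightarrow> v \<in> dob_V k \<Longrightarrow> gdist (dob_V k) (dob_E k) u v = dd u v"
  apply (rule gdist_eq[where p = "pp u"])
  subgoal by assumption
  subgoal by (cases u) auto
  subgoal using zero by blast
  subgoal using par by blast
  subgoal using lip by blast
  subgoal by assumption
  done

lemma Vdecomp: "dob_V k = {Va, Vb, Vc, Vd, Vab1, Vab2} \<union> (Vai ` {..<k} \<union> Vbj ` {1..<k})"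
  unfolding dob_V_def by auto

lemma sumV: "sum g (dob_V k) = g Va + g Vb + g Vc + g Vd + g Vab1 + g Vab2
   + (\<Sum>i<k. g (Vai i)) + (\<Sum>j\<in>{1..<k}. g (Vbj j))"
proof -
  have "sum g (dob_V k) = sum g {Va, Vb, Vc, Vd, Vab1, Vab2} + sum g (Vai ` {..<k} \<union> Vbj ` {1..<k})"
    unfolding Vdecomp by (rule sum.union_disjoint) auto
  also have "sum g (Vai ` {..<k} \<union> Vbj ` {1..<k}) = sum g (Vai ` {..<k}) + sum g (Vbj ` {1..<k})"
    by (rule sum.union_disjoint) auto
  also have "sum g (Vai ` {..<k}) = (\<Sum>i<k. g (Vai i))" by (simp add: sum.reindex inj_on_def)
  also have "sum g (Vbj ` {1..<k}) = (\<Sum>j\<in>{1..<k}. g (Vbj j))" by (simp add: sum.reindex inj_on_def)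
  finally show ?thesis by (simp add: ac_simps)
qed

lemma cardV: "k \<ge> 1 \<Longrightarrow> card (dob_V k) = 2 * k + 5"
  using sumV[of "\<lambda>_. 1::nat" k] by simp

lemma L1: "i < k \<Longrightarrow> (\<Sum>l<k. if l = i then 0 else c) = (c::nat) * (k - 1)"
proof -
  assume "i < k"
  then have "(\<Sum>l<k. if l = i then 0 else c) = (\<Sum>l\<in>{..<k} - {i}. c)"
    by (subst sum.remove[of _ i]) (auto intro!: sum.cong)
  then show ?thesis using \<open>i < k\<close> by simp
qed

lemma L4: "1 \<le> j \<Longrightarrow> j < k \<Longrightarrow> (\<Sum>l\<in>{1..<k}. if l = j then 0 else c) = (c::nat) * (k - 2)"
proof -
  assume "1 \<le> j" "j < k"
  then have "(\<Sum>l\<in>{1..<k}. if l = j then 0 else c) = (\<Sum>l\<in>{1..<k} - {j}. c)"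
    by (subst sum.remove[of _ j]) (auto intro!: sum.cong)
  then show ?thesis using \<open>1 \<le> j\<close> \<open>j < k\<close> by (simp add: numeral_2_eq_2)
qed

lemma L2: "(\<Sum>j\<in>{1..<k}. if 1 \<le> j \<and> j \<le> i then 1 else 3) = min i (k - 1) + 3 * (k - 1 - (i::nat)) "
proof (induction k)
  case 0 then show ?case by simp
next
  case (Suc k)
  show ?case
  proof (cases "k = 0")
    case True then show ?thesis by simp
  next
    case False
    then have "{1..<Suc k} = insert k {1..<k}" by auto
    then show ?thesis using Suc False by simp arith
  qed
qed

lemma L3: "1 \<le> j \<Longrightarrow> (\<Sum>i<k. if 1 \<le> j \<and> j \<le> i then 1 else 3) = (k - j) + 3 * min j (k::nat)"
  by (induction k) auto

lemma tr: "u \<in> dob_V k \<Longrightarrow> transmission (dob_V k) (dob_E k) u = sum (dd u) (dob_V k)"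
  unfolding transmission_def by (rule sum.cong) (auto simp: gd)

definition T :: "nat \<Rightarrow> dvert \<Rightarrow> nat" where
  "T k v = (case v of Va \<Rightarrow> 3*k+4 | Vb \<Rightarrow> 3*k+5 | Vab1 \<Rightarrow> 3*k+6 | Vab2 \<Rightarrow> 3*k+7
     | Vc \<Rightarrow> 5*k+7 | Vd \<Rightarrow> 5*k+8 | Vai i \<Rightarrow> 5*k+6-2*i | Vbj j \<Rightarrow> 3*k+7+2*j)"


lemma sVa: "k \<ge> 1 \<Longrightarrow> sum (dd Va) (dob_V k) = 3*k+4" by (simp add: sumV)
lemma sVb: "k \<ge> 1 \<Longrightarrow> sum (dd Vb) (dob_V k) = 3*k+5" by (simp add: sumV)
lemma sVc: "k \<ge> 1 \<Longrightarrow> sum (dd Vc) (dob_V k) = 5*k+7" by (simp add: sumV)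
lemma sVd: "k \<ge> 1 \<Longrightarrow> sum (dd Vd) (dob_V k) = 5*k+8" by (simp add: sumV)
lemma sVab1: "k \<ge> 1 \<Longrightarrow> sum (dd Vab1) (dob_V k) = 3*k+6" by (simp add: sumV)
lemma sVab2: "k \<ge> 1 \<Longrightarrow> sum (dd Vab2) (dob_V k) = 3*k+7" by (simp add: sumV)
lemma sVai: "i < k \<Longrightarrow> sum (dd (Vai i)) (dob_V k) = 5*k+6-2*i"
proof -
  assume i: "i < k"
  have "sum (dd (Vai i)) (dob_V k) = 1 + 2 + 2 + 3 + 1 + 2 + (\<Sum>l<k. if l = i then 0 else 2)
     + (\<Sum>j\<in>{1..<k}. if 1 \<le> j \<and> j \<le> i then 1 else 3)"
    by (simp add: sumV)
  also have "\<dots> = 11 + 2 * (k - 1) + (min i (k - 1) + 3 * (k - 1 - i))"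
    using L1[OF i, of 2] L2[where k=k and i=i] by simp
  finally show ?thesis using i by simp
qed
lemma sVbj: "1 \<le> j \<Longrightarrow> j < k \<Longrightarrow> sum (dd (Vbj j)) (dob_V k) = 3*k+7+2*j"
proof -
  assume j: "1 \<le> j" "j < k"
  have "sum (dd (Vbj j)) (dob_V k) = 2 + 1 + 3 + 2 + 2 + 1 + (\<Sum>i<k. if 1 \<le> j \<and> j \<le> i then 1 else 3)
     + (\<Sum>l\<in>{1..<k}. if l = j then 0 else 2)"
    by (simp add: sumV)
  also have "\<dots> = 11 + ((k - j) + 3 * min j k) + 2 * (k - 2)"
    using L3[OF j(1), where k=k] L4[OF j, of 2] by simp
  finally show ?thesis using j by simp
qed


lemma trv: "k \<ge> 1 \<Longrightarrow> u \<in> dob_V k \<Longrightarrow> transmission (dob_V k) (dob_E k) u = T k u"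
  by (cases u) (auto simp: tr T_def memV sVa sVb sVc sVd sVab1 sVab2 sVai sVbj simp del: dd.simps)

lemma conn: "connected_graph (dob_V k) (dob_E k)"
  unfolding connected_graph_def
proof (intro ballI)
  fix u v assume uv: "u \<in> dob_V k" "v \<in> dob_V k"
  show "\<exists>xs. walk (dob_E k) xs \<and> set xs \<subseteq> dob_V k \<and> hd xs = u \<and> last xs = v"
    using walk_upper[of u "dob_V k" "dd u" "pp u" "dob_E k" v "dd u v"] uv zero par by blast
qed

lemma Timg: "k \<ge> 1 \<Longrightarrow> T k ` dob_V k = {3 * k + 4 .. 5 * k + 8}"
proof
  assume k: "k \<ge> 1"
  show "T k ` dob_V k \<subseteq> {3 * k + 4 .. 5 * k + 8}"
  proof
    fix n assume "n \<in> T k ` dob_V k"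
    then obtain x where x: "x \<in> dob_V k" "n = T k x" by auto
    then show "n \<in> {3 * k + 4 .. 5 * k + 8}" using k by (cases x) (auto simp: T_def memV)
  qed
next
  assume k: "k \<ge> 1"
  show "{3 * k + 4 .. 5 * k + 8} \<subseteq> T k ` dob_V k"
  proof
    fix n assume n: "n \<in> {3 * k + 4 .. 5 * k + 8}"
    have V: "Va \<in> dob_V k" "Vb \<in> dob_V k" "Vc \<in> dob_V k" "Vd \<in> dob_V k" "Vab1 \<in> dob_V k"
      "Vab2 \<in> dob_V k" "Vai 0 \<in> dob_V k" using k by (auto simp: memV)
    have mid: "n \<in> T k ` dob_V k" if "3*k+8 \<le> n" "n \<le> 5*k+5"
    proof (cases "even (n - (3*k+7))")
      case True
      then obtain m where m: "n - (3*k+7) = 2*m" unfolding dvd_def by blast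
      have "n = 3*k+7+2*m" "1 \<le> m" "m < k" using m that by linarith+
      then show ?thesis by (intro image_eqI[of _ _ "Vbj m"]) (auto simp: T_def memV)
    next
      case False
      have "n - (3*k+7) = Suc (n - (3*k+8))" using that by linarith
      with False have "even (n - (3*k+8))" by simp
      then obtain m where m: "n - (3*k+8) = 2*m" unfolding dvd_def by blast
      have "n = 5*k+6-2*(k-1-m)" "1 \<le> k-1-m" "k-1-m < k" using m that by linarith+
      then show ?thesis by (intro image_eqI[of _ _ "Vai (k-1-m)"]) (auto simp: T_def memV)
    qed
    show "n \<in> T k ` dob_V k"
    proof (cases "3*k+8 \<le> n \<and> n \<le> 5*k+5")
      case True then show ?thesis using mid by blast
    next
      case False
      then have "n = 3*k+4 \<or> n = 3*k+5 \<or> n = 3*k+6 \<or> n = 3*k+7 \<or> n = 5*k+6 \<or> n = 5*k+7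
        \<or> n = 5*k+8" using n by auto
      then show ?thesis using V
        apply (elim disjE)
        apply (rule image_eqI[of _ _ Va]; simp add: T_def)
        apply (rule image_eqI[of _ _ Vb]; simp add: T_def)
        apply (rule image_eqI[of _ _ Vab1]; simp add: T_def)
        apply (rule image_eqI[of _ _ Vab2]; simp add: T_def)
        apply (rule image_eqI[of _ _ "Vai 0"]; simp add: T_def)
        apply (rule image_eqI[of _ _ Vc]; simp add: T_def)
        apply (rule image_eqI[of _ _ Vd]; simp add: T_def)
        done
    qed
  qed
qed

lemma finV: "finite (dob_V k)" unfolding dob_V_def by auto

lemma Tinj: "k \<ge> 1 \<Longrightarrow> inj_on (T k) (dob_V k)"
  by (rule eq_card_imp_inj_on[OF finV]) (simp add: Timg cardV)

theorem theorem3: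
  fixes k :: nat
  assumes "k \<ge> 1"
  shows "connected_graph (dob_V k) (dob_E k)
       \<and> card (dob_V k) = 2 * k + 5
       \<and> interval_transmission_irregular (dob_V k) (dob_E k)
       \<and> inj_on (transmission (dob_V k) (dob_E k)) (dob_V k)
       \<and> transmission (dob_V k) (dob_E k) ` dob_V k = {3 * k + 4 .. 5 * k + 8}"
proof -
  have img: "transmission (dob_V k) (dob_E k) ` dob_V k = {3 * k + 4 .. 5 * k + 8}"
    using Timg[OF assms] trv[OF assms] by (metis (no_types, lifting) image_cong)
  have inj: "inj_on (transmission (dob_V k) (dob_E k)) (dob_V k)"
    using Tinj[OF assms] inj_on_cong[of "dob_V k" "transmission (dob_V k) (dob_E k)" "T k"] trv[OF assms] by blast
  have "interval_transmission_irregular (dob_V k) (dob_E k)"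
    unfolding interval_transmission_irregular_def transmission_irregular_def
    using inj img by (intro conjI exI[of _ "3*k+4"] exI[of _ "5*k+8"]) auto
  then show ?thesis using conn cardV[OF assms] inj img by blast
qed

end
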